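(* Let $\eta>0$, $\Psi(\boldsymbol x):=\log\sum_{i=1}^N\exp(\sqrt2\eta x_i)$ for $\boldsymbol x\in\mathbb{R}^N$, and $\log\Phi(\boldsymbol x,t)=-\eta^2t+\Psi(\boldsymbol x)$ for $(\boldsymbol x,t)\in\mathbb{R}^{N+1}$ (the logarithm of the total potential $\Phi(\boldsymbol x,t)=\sum_i\exp(\sqrt2\eta x_i-\eta^2t)$). Then $\Psi$ satisfies $(2\sqrt2\eta,2)$-generalized self-concordance on all of $\mathbb{R}^N$ with respect to $\|\cdot\|_\infty$, and $\log\Phi$ satisfies $(2\sqrt2\eta,2)$-generalized self-concordance on all of $\mathbb{R}^{N+1}$ with respect to $\|\cdot\|_*$, where $\|(\boldsymbol x,t)\|_*=\|\boldsymbol x\|_\infty$.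
   Context: A $C^3$ function $f$ on an open set $\mathrm{dom}(f)\subseteq\mathbb{R}^p$ satisfies $(M,2)$-generalized self-concordance in a (semi)norm $\|\cdot\|_*$ on $\mathcal C\subseteq\mathrm{dom}(f)$ if for all $\boldsymbol x\in\mathcal C$ and $\boldsymbol u,\boldsymbol v\in\mathbb{R}^p$: $|\nabla^3f(\boldsymbol x)[\boldsymbol u,\boldsymbol u,\boldsymbol v]|\le M\|\boldsymbol v\|_*\,\boldsymbol u^{\mathsf T}\nabla^2f(\boldsymbol x)\boldsymbol u$. It is global when $\mathcal C=\mathrm{dom}(f)$. *)

theory Defs
  imports "HOL-Analysis.Analysis"
begin

text \<open>(M,2)-generalized self-concordance of a C^3 function f on an open set D,
  on a subset C of D, with respect to a (semi)norm nrm.  The third derivative evaluated at [u,u,v] is f3 x v u u and the Hessian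
  form is f2 x u u.\<close>
definition gsc2 ::
  "real \<Rightarrow> ('a::euclidean_space \<Rightarrow> real) \<Rightarrow> 'a set \<Rightarrow> 'a set \<Rightarrow> ('a \<Rightarrow> real) \<Rightarrow> bool" where
  "gsc2 M nrm D C f \<longleftrightarrow> open D \<and> C \<subseteq> D \<and>
     (\<exists>(f1 :: 'a \<Rightarrow> ('a \<Rightarrow>\<^sub>L real)) (f2 :: 'a \<Rightarrow> ('a \<Rightarrow>\<^sub>L 'a \<Rightarrow>\<^sub>L real))
        (f3 :: 'a \<Rightarrow> ('a \<Rightarrow>\<^sub>L 'a \<Rightarrow>\<^sub>L 'a \<Rightarrow>\<^sub>L real)).
        (\<forall>x\<in>D. (f has_derivative blinfun_apply (f1 x)) (at x)
              \<and> (f1 has_derivative blinfun_apply (f2 x)) (at x)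
              \<and> (f2 has_derivative blinfun_apply (f3 x)) (at x))
        \<and> continuous_on D f3
        \<and> (\<forall>x\<in>C. \<forall>u v.
             \<bar>blinfun_apply (blinfun_apply (blinfun_apply (f3 x) v) u) u\<bar>
               \<le> M * nrm v * blinfun_apply (blinfun_apply (f2 x) u) u))"

definition Psi :: "real \<Rightarrow> real^'n \<Rightarrow> real" where
  "Psi \<eta> x = ln (\<Sum>i\<in>UNIV. exp (sqrt 2 * \<eta> * x $ i))"

definition logPhi :: "real \<Rightarrow> (real^'n) \<times> real \<Rightarrow> real" where
  "logPhi \<eta> p = - (\<eta> ^ 2) * snd p + Psi \<eta> (fst p)"

end

theory Submission
  imports Defs
begin

definition K :: "'a::euclidean_space \<Rightarrow> 'c::real_normed_vector \<Rightarrow> 'a \<Rightarrow>\<^sub>L 'c" where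
  "K b c = (blinfun_scaleR_left c) o\<^sub>L (blinfun_inner_left b)"

lemma K_apply[simp]: "blinfun_apply (K b c) u = (u \<bullet> b) *\<^sub>R c"
  by (simp add: K_def)

lemma K_bl: "bounded_linear (K b)"
  unfolding K_def
  by (rule bounded_linear_compose[OF bounded_bilinear.bounded_linear_left[OF bounded_bilinear_blinfun_compose] bounded_linear_blinfun_scaleR_left])

lemma lin_expand:
  fixes g :: "'a::euclidean_space \<Rightarrow> 'c::real_vector"
  assumes "linear g"
  shows "(\<Sum>b\<in>Basis. (u \<bullet> b) *\<^sub>R g b) = g u"
proof -
  have "g u = g (\<Sum>b\<in>Basis. (u \<bullet> b) *\<^sub>R b)" by (simp add: euclidean_representation)
  also have "\<dots> = (\<Sum>b\<in>Basis. (u \<bullet> b) *\<^sub>R g b)"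
    using assms by (simp add: linear_sum linear_scale)
  finally show ?thesis by simp
qed

lemma lin_expand_real:
  fixes g :: "'a::euclidean_space \<Rightarrow> real"
  assumes "linear g"
  shows "(\<Sum>b\<in>Basis. (u \<bullet> b) * g b) = g u"
  using lin_expand[OF assms, of u] by simp

lemma blinfun_expand:
  fixes F :: "'a::euclidean_space \<Rightarrow>\<^sub>L 'c::real_normed_vector"
  shows "F = (\<Sum>b\<in>Basis. K b (blinfun_apply F b))"
  by (rule blinfun_eqI) (simp add: blinfun.sum_left lin_expand bounded_linear.linear[OF blinfun.bounded_linear_right])

lemma deriv_blinfun:
  fixes F :: "'x::real_normed_vector \<Rightarrow> ('a::euclidean_space \<Rightarrow>\<^sub>L 'c::real_normed_vector)"
  assumes "\<And>b. b \<in> Basis \<Longrightarrow> ((\<lambda>x. blinfun_apply (F x) b) has_derivative (\<lambda>h. blinfun_apply (G h) b)) (at x)"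
  shows "(F has_derivative G) (at x)"
proof -
  have e1: "F = (\<lambda>x. \<Sum>b\<in>Basis. K b (blinfun_apply (F x) b))"
    by (rule ext, rule blinfun_expand)
  have e2: "G = (\<lambda>h. \<Sum>b\<in>Basis. K b (blinfun_apply (G h) b))"
    by (rule ext, rule blinfun_expand)
  have "((\<lambda>x. \<Sum>b\<in>Basis. K b (blinfun_apply (F x) b)) has_derivative (\<lambda>h. \<Sum>b\<in>Basis. K b (blinfun_apply (G h) b))) (at x)"
    by (intro has_derivative_sum bounded_linear.has_derivative[OF K_bl] assms)
  then show ?thesis using e1 e2 by metis
qed

definition lin1 :: "('a::euclidean_space \<Rightarrow> 'c::real_normed_vector) \<Rightarrow> 'a \<Rightarrow>\<^sub>L 'c" where
  "lin1 g = (\<Sum>b\<in>Basis. K b (g b))"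

lemma lin1_apply: "blinfun_apply (lin1 g) u = (\<Sum>b\<in>Basis. (u \<bullet> b) *\<^sub>R g b)"
  by (simp add: lin1_def blinfun.sum_left)

lemma lin1_apply_lin: "linear g \<Longrightarrow> blinfun_apply (lin1 g) u = g u"
  by (simp add: lin1_apply lin_expand)

lemma gsc2_intro:
  fixes f :: "'a::euclidean_space \<Rightarrow> real"
    and F1 :: "'a \<Rightarrow> 'a \<Rightarrow> real" and F2 :: "'a \<Rightarrow> 'a \<Rightarrow> 'a \<Rightarrow> real"
    and F3 :: "'a \<Rightarrow> 'a \<Rightarrow> 'a \<Rightarrow> 'a \<Rightarrow> real"
  assumes l1: "\<And>x. linear (F1 x)"
    and l2a: "\<And>x v. linear (F2 x v)" and l2b: "\<And>x u. linear (\<lambda>v. F2 x v u)"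
    and l3a: "\<And>x w v. linear (F3 x w v)" and l3b: "\<And>x w u. linear (\<lambda>v. F3 x w v u)"
    and l3c: "\<And>x v u. linear (\<lambda>w. F3 x w v u)"
    and d0: "\<And>x. (f has_derivative F1 x) (at x)"
    and d1: "\<And>x u. ((\<lambda>x. F1 x u) has_derivative (\<lambda>h. F2 x h u)) (at x)"
    and d2: "\<And>x v u. ((\<lambda>x. F2 x v u) has_derivative (\<lambda>h. F3 x h v u)) (at x)"
    and c3: "\<And>w v u. continuous_on UNIV (\<lambda>x. F3 x w v u)"
    and ineq: "\<And>x u v. \<bar>F3 x v u u\<bar> \<le> M * nrm v * F2 x u u"
  shows "gsc2 M nrm UNIV UNIV f"
proof -
  define f1 where "f1 x = lin1 (F1 x)" for x
  define f2 where "f2 x = lin1 (\<lambda>v. lin1 (F2 x v))" for x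
  define f3 where "f3 x = lin1 (\<lambda>w. lin1 (\<lambda>v. lin1 (F3 x w v)))" for x
  have a1: "blinfun_apply (f1 x) u = F1 x u" for x u
    by (simp add: f1_def lin1_apply_lin l1)
  have a2: "blinfun_apply (blinfun_apply (f2 x) v) u = F2 x v u" for x v u
    by (simp add: f2_def lin1_apply blinfun.sum_left blinfun.scaleR_left lin_expand_real l2a l2b)
  have a3: "blinfun_apply (blinfun_apply (blinfun_apply (f3 x) w) v) u = F3 x w v u" for x w v u
    by (simp add: f3_def lin1_apply blinfun.sum_left blinfun.scaleR_left lin_expand_real l3a l3b l3c)
  have D0: "(f has_derivative blinfun_apply (f1 x)) (at x)" for x
    using d0[of x] by (simp add: a1[abs_def] fun_eq_iff[symmetric])
  have D1: "(f1 has_derivative blinfun_apply (f2 x)) (at x)" for x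
    by (rule deriv_blinfun) (simp add: a1 a2 d1)
  have D2: "(f2 has_derivative blinfun_apply (f3 x)) (at x)" for x
    by (rule deriv_blinfun, rule deriv_blinfun) (simp add: a2 a3 d2)
  have C: "continuous_on UNIV f3"
    unfolding f3_def lin1_def
    by (intro continuous_on_sum bounded_linear.continuous_on[OF K_bl] c3)
  show ?thesis unfolding gsc2_def
    apply (intro conjI exI[of _ f1] exI[of _ f2] exI[of _ f3])
    using D0 D1 D2 C ineq by (auto simp: a2 a3)
qed


definition SS :: "real \<Rightarrow> real^'n \<Rightarrow> real" where "SS a x = (\<Sum>i\<in>UNIV. exp (a * x $ i))"
definition pp :: "real \<Rightarrow> real^'n \<Rightarrow> 'n \<Rightarrow> real" where "pp a x i = exp (a * x $ i) / SS a x"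
definition E1 where "E1 a x u = (\<Sum>i\<in>UNIV. pp a x i * u $ i)"
definition E2 where "E2 a x u v = (\<Sum>i\<in>UNIV. pp a x i * (u $ i * v $ i))"
definition E3 where "E3 a x u v w = (\<Sum>i\<in>UNIV. pp a x i * (u $ i * v $ i * w $ i))"

lemma SS_pos: "SS a x > 0"
  unfolding SS_def by (rule sum_pos) auto

lemma pp_sum: "(\<Sum>i\<in>UNIV. pp a x i) = 1"
  using SS_pos[of a x] by (simp add: pp_def SS_def sum_divide_distrib[symmetric])

lemma pp_pos: "pp a x i > 0"
  using SS_pos[of a x] by (simp add: pp_def)

lemma SS_deriv: "(SS a has_derivative (\<lambda>h. \<Sum>i\<in>UNIV. exp (a * x $ i) * (a * h $ i))) (at x)"
  unfolding SS_def
  by (rule has_derivative_eq_rhs, (rule derivative_eq_intros bounded_linear.has_derivative[OF bounded_linear_vec_nth])+)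
     (auto simp: fun_eq_iff mult_ac)

lemma pp_deriv: "((\<lambda>x. pp a x i) has_derivative (\<lambda>h. a * pp a x i * (h $ i - E1 a x h))) (at x)"
proof -
  have "((\<lambda>x. exp (a * x $ i) / SS a x) has_derivative
     (\<lambda>h. (exp (a * x $ i) * (a * h $ i)) / SS a x - exp (a * x $ i) * (\<Sum>j\<in>UNIV. exp (a * x $ j) * (a * h $ j)) / (SS a x)^2)) (at x)"
    using SS_pos[of a x]
    apply (rule_tac has_derivative_eq_rhs)
    apply (rule has_derivative_divide[OF _ SS_deriv])
    apply (auto intro!: derivative_eq_intros bounded_linear.has_derivative[OF bounded_linear_vec_nth])
    apply (simp add: fun_eq_iff field_simps power2_eq_square)
    done
  moreover have "(\<lambda>h. (exp (a * x $ i) * (a * h $ i)) / SS a x - exp (a * x $ i) * (\<Sum>j\<in>UNIV. exp (a * x $ j) * (a * h $ j)) / (SS a x)^2)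
     = (\<lambda>h. a * pp a x i * (h $ i - E1 a x h))"
    using SS_pos[of a x]
    by (simp add: fun_eq_iff pp_def E1_def field_simps power2_eq_square sum_distrib_left sum_divide_distrib)
  ultimately show ?thesis unfolding pp_def by simp
qed

lemma E1_deriv: "((\<lambda>x. E1 a x u) has_derivative (\<lambda>h. a * (E2 a x u h - E1 a x u * E1 a x h))) (at x)"
proof -
  have "((\<lambda>x. \<Sum>i\<in>UNIV. pp a x i * u $ i) has_derivative (\<lambda>h. \<Sum>i\<in>UNIV. a * pp a x i * (h $ i - E1 a x h) * u $ i)) (at x)"
    by (intro has_derivative_sum has_derivative_mult_left pp_deriv)
  moreover have "(\<lambda>h. \<Sum>i\<in>UNIV. a * pp a x i * (h $ i - E1 a x h) * u $ i) = (\<lambda>h. a * (E2 a x u h - E1 a x u * E1 a x h))"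
    by (simp add: fun_eq_iff E2_def E1_def algebra_simps sum_subtractf sum_distrib_left sum_distrib_right)
  ultimately show ?thesis unfolding E1_def by simp
qed

lemma E2_deriv: "((\<lambda>x. E2 a x u v) has_derivative (\<lambda>h. a * (E3 a x u v h - E2 a x u v * E1 a x h))) (at x)"
proof -
  have "((\<lambda>x. \<Sum>i\<in>UNIV. pp a x i * (u $ i * v $ i)) has_derivative (\<lambda>h. \<Sum>i\<in>UNIV. a * pp a x i * (h $ i - E1 a x h) * (u $ i * v $ i))) (at x)"
    by (intro has_derivative_sum has_derivative_mult_left pp_deriv)
  moreover have "(\<lambda>h. \<Sum>i\<in>UNIV. a * pp a x i * (h $ i - E1 a x h) * (u $ i * v $ i)) = (\<lambda>h. a * (E3 a x u v h - E2 a x u v * E1 a x h))"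
    by (simp add: fun_eq_iff E2_def E3_def algebra_simps sum_subtractf sum_distrib_left sum_distrib_right)
  ultimately show ?thesis unfolding E2_def by simp
qed

lemma lnSS_deriv: "((\<lambda>x. ln (SS a x)) has_derivative (\<lambda>h. a * E1 a x h)) (at x)"
proof -
  have "((\<lambda>x. ln (SS a x)) has_derivative (\<lambda>h. (\<Sum>i\<in>UNIV. exp (a * x $ i) * (a * h $ i)) / SS a x)) (at x)"
    using SS_pos[of a x]
    by (rule_tac has_derivative_eq_rhs, rule has_derivative_ln[OF _ SS_deriv]) (auto simp: fun_eq_iff field_simps)
  moreover have "(\<lambda>h. (\<Sum>i\<in>UNIV. exp (a * x $ i) * (a * h $ i)) / SS a x) = (\<lambda>h. a * E1 a x h)"
    using SS_pos[of a x]
    by (simp add: fun_eq_iff E1_def pp_def sum_distrib_left sum_divide_distrib algebra_simps)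
  ultimately show ?thesis by simp
qed

lemma pp_cont: "continuous_on UNIV (\<lambda>x. pp a x i)"
proof -
  have nz: "\<And>x. (\<Sum>i\<in>UNIV. exp (a * x $ i)) \<noteq> 0"
    using SS_pos[of a] unfolding SS_def by (metis less_irrefl)
  have "continuous_on UNIV (\<lambda>x. exp (a * x $ i) / SS a x)"
    unfolding SS_def by (intro continuous_intros) (simp add: nz)
  then show ?thesis unfolding pp_def .
qed

lemma E1_cont: "continuous_on UNIV (\<lambda>x. E1 a x u)"
  unfolding E1_def by (intro continuous_intros pp_cont)
lemma E2_cont: "continuous_on UNIV (\<lambda>x. E2 a x u v)"
  unfolding E2_def by (intro continuous_intros pp_cont)
lemma E3_cont: "continuous_on UNIV (\<lambda>x. E3 a x u v w)"
  unfolding E3_def by (intro continuous_intros pp_cont)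

lemma E1_lin: "linear (E1 a x)"
  by (rule linearI) (simp_all add: E1_def algebra_simps sum.distrib sum_distrib_left)
lemma E2_lin1: "linear (\<lambda>u. E2 a x u v)"
  by (rule linearI) (simp_all add: E2_def algebra_simps sum.distrib sum_distrib_left)
lemma E2_lin2: "linear (E2 a x u)"
  by (rule linearI) (simp_all add: E2_def algebra_simps sum.distrib sum_distrib_left)
lemma E3_lin1: "linear (\<lambda>u. E3 a x u v w)"
  by (rule linearI) (simp_all add: E3_def algebra_simps sum.distrib sum_distrib_left)
lemma E3_lin2: "linear (\<lambda>v. E3 a x u v w)"
  by (rule linearI) (simp_all add: E3_def algebra_simps sum.distrib sum_distrib_left)
lemma E3_lin3: "linear (E3 a x u v)"
  by (rule linearI) (simp_all add: E3_def algebra_simps sum.distrib sum_distrib_left)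


definition "F1 a x u = a * E1 a x u"
definition "F2 a x v u = a^2 * (E2 a x v u - E1 a x v * E1 a x u)"
definition "F3 a x w v u = a^3 * (E3 a x w v u - E2 a x w v * E1 a x u - E2 a x w u * E1 a x v
   - E2 a x v u * E1 a x w + 2 * E1 a x w * E1 a x v * E1 a x u)"

lemma E2_sym: "E2 a x u v = E2 a x v u"
  by (simp add: E2_def mult_ac)
lemma E3_sym: "E3 a x u v w = E3 a x w u v" "E3 a x u v w = E3 a x v u w"
  by (simp_all add: E3_def mult_ac)

lemma d1: "((\<lambda>x. F1 a x u) has_derivative (\<lambda>h. F2 a x h u)) (at x)"
  unfolding F1_def F2_def
  by (rule has_derivative_eq_rhs, rule has_derivative_mult_right, rule E1_deriv)
     (simp add: fun_eq_iff power2_eq_square E2_sym algebra_simps)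

lemma d2: "((\<lambda>x. F2 a x v u) has_derivative (\<lambda>h. F3 a x h v u)) (at x)"
  unfolding F2_def F3_def
  apply (rule has_derivative_eq_rhs)
   apply (rule has_derivative_mult_right, rule has_derivative_diff, rule E2_deriv, rule has_derivative_mult, rule E1_deriv, rule E1_deriv)
  apply (simp add: fun_eq_iff power2_eq_square power3_eq_cube E2_sym algebra_simps)
  apply (metis E3_sym)
  done

lemma E_add[simp]:
  "E1 a x (u + u') = E1 a x u + E1 a x u'" "E1 a x (c *\<^sub>R u) = c * E1 a x u"
  "E2 a x (u + u') v = E2 a x u v + E2 a x u' v" "E2 a x (c *\<^sub>R u) v = c * E2 a x u v"
  "E2 a x v (u + u') = E2 a x v u + E2 a x v u'" "E2 a x v (c *\<^sub>R u) = c * E2 a x v u"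
  "E3 a x (u + u') v w = E3 a x u v w + E3 a x u' v w" "E3 a x (c *\<^sub>R u) v w = c * E3 a x u v w"
  "E3 a x v (u + u') w = E3 a x v u w + E3 a x v u' w" "E3 a x v (c *\<^sub>R u) w = c * E3 a x v u w"
  "E3 a x v w (u + u') = E3 a x v w u + E3 a x v w u'" "E3 a x v w (c *\<^sub>R u) = c * E3 a x v w u"
  by (simp_all add: E1_def E2_def E3_def algebra_simps sum.distrib sum_distrib_left)

lemma lin_all:
  "linear (F1 a x)" "linear (F2 a x v)" "linear (\<lambda>v. F2 a x v u)"
  "linear (F3 a x w v)" "linear (\<lambda>v. F3 a x w v u)" "linear (\<lambda>w. F3 a x w v u)"
  by (rule linearI; simp add: F1_def F2_def F3_def algebra_simps)+

lemma F2_var: "F2 a x u u = a^2 * (\<Sum>i\<in>UNIV. pp a x i * (u $ i - E1 a x u)^2)"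
proof -
  define m where "m = E1 a x u"
  have "(\<Sum>i\<in>UNIV. pp a x i * (u $ i - m)^2)
      = (\<Sum>i\<in>UNIV. pp a x i * (u $ i * u $ i) - 2 * m * (pp a x i * u $ i) + m^2 * pp a x i)"
    by (rule sum.cong) (auto simp: power2_eq_square algebra_simps)
  also have "\<dots> = E2 a x u u - 2 * m * m + m^2"
    by (simp add: sum.distrib sum_subtractf sum_distrib_left[symmetric] pp_sum E2_def E1_def m_def)
  finally have S: "(\<Sum>i\<in>UNIV. pp a x i * (u $ i - m)^2) = E2 a x u u - m * m"
    by (simp add: power2_eq_square)
  show ?thesis unfolding F2_def m_def[symmetric] S by simp
qed

lemma F3_var: "F3 a x v u u = a^3 * (\<Sum>i\<in>UNIV. pp a x i * (u $ i - E1 a x u)^2 * (v $ i - E1 a x v))"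
proof -
  define m where "m = E1 a x u"
  define n where "n = E1 a x v"
  have "(\<Sum>i\<in>UNIV. pp a x i * (u $ i - m)^2 * (v $ i - n))
      = (\<Sum>i\<in>UNIV. pp a x i * (v $ i * u $ i * u $ i) - n * (pp a x i * (u $ i * u $ i))
          - 2 * m * (pp a x i * (v $ i * u $ i)) + 2 * m * n * (pp a x i * u $ i)
          + m^2 * (pp a x i * v $ i) - m^2 * n * pp a x i)"
    by (rule sum.cong) (auto simp: power2_eq_square algebra_simps)
  also have "\<dots> = E3 a x v u u - n * E2 a x u u - 2 * m * E2 a x v u + 2 * m * n * m + m^2 * n - m^2 * n"
    by (simp add: sum.distrib sum_subtractf sum_distrib_left[symmetric] pp_sum E2_def E1_def E3_def m_def n_def)
  finally have S: "(\<Sum>i\<in>UNIV. pp a x i * (u $ i - m)^2 * (v $ i - n)) = E3 a x v u u - n * E2 a x u u - 2 * m * E2 a x v u + 2 * m * n * m" 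
    by simp
  show ?thesis unfolding F3_def m_def[symmetric] n_def[symmetric] S by (simp add: E2_sym algebra_simps)
qed

lemma E1_bound: "\<bar>E1 a x v\<bar> \<le> infnorm v"
proof -
  have "\<bar>E1 a x v\<bar> \<le> (\<Sum>i\<in>UNIV. \<bar>pp a x i * v $ i\<bar>)" unfolding E1_def by (rule sum_abs)
  also have "\<dots> \<le> (\<Sum>i\<in>UNIV. pp a x i * infnorm v)"
  proof (intro sum_mono)
    fix i
    have "\<bar>pp a x i * v $ i\<bar> = pp a x i * \<bar>v $ i\<bar>" using pp_pos[of a x i] by (simp add: abs_mult)
    also have "\<dots> \<le> pp a x i * infnorm v"
      using pp_pos[of a x i] component_le_infnorm_cart[of v i] by (simp add: mult_left_mono)
    finally show "\<bar>pp a x i * v $ i\<bar> \<le> pp a x i * infnorm v" .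
  qed
  also have "\<dots> = infnorm v" by (simp add: sum_distrib_right[symmetric] pp_sum)
  finally show ?thesis .
qed

lemma ineq:
  assumes "a \<ge> 0"
  shows "\<bar>F3 a x v u u\<bar> \<le> (2 * a) * infnorm v * F2 a x u u"
proof -
  define d where "d i = pp a x i * (u $ i - E1 a x u)^2" for i
  have dn: "d i \<ge> 0" for i using pp_pos[of a x i] by (simp add: d_def)
  have vb: "\<bar>v $ i - E1 a x v\<bar> \<le> 2 * infnorm v" for i
    using component_le_infnorm_cart[of v i] E1_bound[of a x v] by linarith
  have "\<bar>\<Sum>i\<in>UNIV. d i * (v $ i - E1 a x v)\<bar> \<le> (\<Sum>i\<in>UNIV. \<bar>d i * (v $ i - E1 a x v)\<bar>)"
    by (rule sum_abs)
  also have "\<dots> \<le> (\<Sum>i\<in>UNIV. d i * (2 * infnorm v))"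
    using dn vb by (intro sum_mono) (simp add: abs_mult mult_left_mono)
  also have "\<dots> = 2 * infnorm v * (\<Sum>i\<in>UNIV. d i)" by (simp add: sum_distrib_left sum_distrib_right mult_ac)
  finally have X: "\<bar>\<Sum>i\<in>UNIV. d i * (v $ i - E1 a x v)\<bar> \<le> 2 * infnorm v * (\<Sum>i\<in>UNIV. d i)" .
  have "\<bar>F3 a x v u u\<bar> = a^3 * \<bar>\<Sum>i\<in>UNIV. d i * (v $ i - E1 a x v)\<bar>"
    using assms by (simp add: F3_var d_def abs_mult)
  also have "\<dots> \<le> a^3 * (2 * infnorm v * (\<Sum>i\<in>UNIV. d i))"
    using assms X by (simp add: mult_left_mono)
  also have "\<dots> = (2 * a) * infnorm v * F2 a x u u"
    by (simp add: F2_var d_def power2_eq_square power3_eq_cube)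
  finally show ?thesis .
qed


lemma F3_cont: "continuous_on UNIV (\<lambda>x. F3 a x w v u)"
  unfolding F3_def by (intro continuous_intros E1_cont E2_cont E3_cont)

lemma lnSS_F1: "((\<lambda>x. ln (SS a x)) has_derivative F1 a x) (at x)"
  using lnSS_deriv[of a x] by (simp add: F1_def[abs_def])

lemma Psi_eq: "Psi \<eta> = (\<lambda>x. ln (SS (sqrt 2 * \<eta>) x))"
  by (simp add: fun_eq_iff Psi_def SS_def)

lemma lin_fst: "linear g \<Longrightarrow> linear (\<lambda>p. g (fst p))"
  using linear_compose[OF linear_fst, of g] by (simp add: o_def)

lemma cont_fst: "continuous_on UNIV g \<Longrightarrow> continuous_on UNIV (\<lambda>p. g (fst p))"
  by (rule continuous_on_compose2[OF _ continuous_on_fst[OF continuous_on_id]]) auto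

lemma deriv_fst: "(g has_derivative g') (at (fst p)) \<Longrightarrow> ((\<lambda>p. g (fst p)) has_derivative (\<lambda>h. g' (fst h))) (at p)"
  by (rule has_derivative_compose[OF has_derivative_fst[OF has_derivative_ident]])

theorem proposition6p9:
  fixes \<eta> :: real
  assumes "\<eta> > 0"
  shows "gsc2 (2 * sqrt 2 * \<eta>) infnorm UNIV UNIV (Psi \<eta> :: real^'n \<Rightarrow> real)
         \<and> gsc2 (2 * sqrt 2 * \<eta>) (\<lambda>p. infnorm (fst p)) UNIV UNIV (logPhi \<eta> :: (real^'n) \<times> real \<Rightarrow> real)"
proof
  define a where "a = sqrt 2 * \<eta>"
  have a0: "a \<ge> 0" using assms by (simp add: a_def)
  have M: "2 * sqrt 2 * \<eta> = 2 * a" by (simp add: a_def)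
  show "gsc2 (2 * sqrt 2 * \<eta>) infnorm UNIV UNIV (Psi \<eta> :: real^'n \<Rightarrow> real)"
    unfolding M Psi_eq a_def[symmetric]
    by (rule gsc2_intro[where ?F1.0 = "F1 a" and ?F2.0 = "F2 a" and ?F3.0 = "F3 a"])
       (auto simp: lin_all d1 d2 F3_cont ineq[OF a0] lnSS_F1)
  show "gsc2 (2 * sqrt 2 * \<eta>) (\<lambda>p. infnorm (fst p)) UNIV UNIV (logPhi \<eta> :: (real^'n) \<times> real \<Rightarrow> real)"
    unfolding M
  proof (rule gsc2_intro[where ?F1.0 = "\<lambda>p u. - (\<eta>^2) * snd u + F1 a (fst p) (fst u)"
        and ?F2.0 = "\<lambda>p v u. F2 a (fst p) (fst v) (fst u)" and ?F3.0 = "\<lambda>p w v u. F3 a (fst p) (fst w) (fst v) (fst u)"])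
    fix p :: "(real^'n) \<times> real"
    show "linear (\<lambda>u. - (\<eta>^2) * snd u + F1 a (fst p) (fst u))"
      by (rule linearI) (auto simp: algebra_simps linear_add[OF lin_all(1)] linear_scale[OF lin_all(1)])
    show "(logPhi \<eta> has_derivative (\<lambda>u. - (\<eta>^2) * snd u + F1 a (fst p) (fst u))) (at p)"
    proof -
      have "((\<lambda>p. - (\<eta>^2) * snd p + ln (SS a (fst p))) has_derivative (\<lambda>u. - (\<eta>^2) * snd u + F1 a (fst p) (fst u))) (at p)"
        by (intro has_derivative_add has_derivative_mult_right has_derivative_snd has_derivative_ident)
           (unfold F1_def, rule deriv_fst[OF lnSS_deriv])
      then show ?thesis by (simp add: logPhi_def[abs_def] Psi_eq a_def)
    qed
  next
    fix p :: "(real^'n) \<times> real" and v u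
    show "linear (\<lambda>u. F2 a (fst p) (fst v) (fst u))" by (rule lin_fst[OF lin_all(2)])
    show "linear (\<lambda>v. F2 a (fst p) (fst v) (fst u))" by (rule lin_fst[OF lin_all(3)])
    show "((\<lambda>p. F2 a (fst p) (fst v) (fst u)) has_derivative (\<lambda>h. F3 a (fst p) (fst h) (fst v) (fst u))) (at p)"
      by (rule deriv_fst[OF d2])
  next
    fix p :: "(real^'n) \<times> real" and w v u
    show "linear (\<lambda>u. F3 a (fst p) (fst w) (fst v) (fst u))" by (rule lin_fst[OF lin_all(4)])
    show "linear (\<lambda>v. F3 a (fst p) (fst w) (fst v) (fst u))" by (rule lin_fst[OF lin_all(5)])
    show "linear (\<lambda>w. F3 a (fst p) (fst w) (fst v) (fst u))" by (rule lin_fst[OF lin_all(6)])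
    show "continuous_on UNIV (\<lambda>p. F3 a (fst p) (fst w) (fst v) (fst u))" by (rule cont_fst[OF F3_cont])
  next
    fix p :: "(real^'n) \<times> real" and u
    show "((\<lambda>p. - (\<eta>^2) * snd u + F1 a (fst p) (fst u)) has_derivative (\<lambda>h. F2 a (fst p) (fst h) (fst u))) (at p)"
      by (rule has_derivative_eq_rhs, rule has_derivative_add[OF has_derivative_const deriv_fst[OF d1]]) simp
  next
    fix p :: "(real^'n) \<times> real" and u v
    show "\<bar>F3 a (fst p) (fst v) (fst u) (fst u)\<bar> \<le> 2 * a * infnorm (fst v) * F2 a (fst p) (fst u) (fst u)"
      by (rule ineq[OF a0])
  qed
qed


end
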